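(* Let $ABC$ be a triangle and let $X, Y$ be points which are conjugate with respect to the circumcircle $\odot(ABC)$. Let $X', Y'$ be the isogonal conjugates of $X, Y$ with respect to $ABC$. Then the line $X'Y'$ passes through the center of the circumconic through $A, B, C, X', Y'$.
   Context: Two points $U, V$ are conjugate with respect to a conic $\mathcal{C}$ if the polar of $U$ with respect to $\mathcal{C}$ passes through $V$ (equivalently, the polar of $V$ passes through $U$). *)

theory Defs
  imports "HOL-Analysis.Analysis"
begin

text \<open>Points of the Euclidean plane are represented as complex numbers.\<close>

definition line :: "complex \<Rightarrow> complex \<Rightarrow> complex set" where
  "line P Q = {P + of_real t * (Q - P) | t. True}"

definition circumcircle :: "complex \<Rightarrow> complex \<Rightarrow> complex \<Rightarrow> complex \<Rightarrow> real \<Rightarrow> bool" where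
  "circumcircle A B C Oc r \<longleftrightarrow> r > 0 \<and> dist Oc A = r \<and> dist Oc B = r \<and> dist Oc C = r"

definition polar_circle :: "complex \<Rightarrow> real \<Rightarrow> complex \<Rightarrow> complex set" where
  "polar_circle Oc r U = {V. (U - Oc) \<bullet> (V - Oc) = r\<^sup>2}"

definition conjugate_wrt_circle :: "complex \<Rightarrow> real \<Rightarrow> complex \<Rightarrow> complex \<Rightarrow> bool" where
  "conjugate_wrt_circle Oc r U V \<longleftrightarrow> V \<in> polar_circle Oc r U"

definition reflect_across :: "complex \<Rightarrow> complex \<Rightarrow> complex \<Rightarrow> complex" where
  "reflect_across A u z = A + (u / cnj u) * cnj (z - A)"

definition bisector_dir :: "complex \<Rightarrow> complex \<Rightarrow> complex \<Rightarrow> complex" where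
  "bisector_dir A B C = (B - A) / of_real (cmod (B - A)) + (C - A) / of_real (cmod (C - A))"

definition isogonal_line :: "complex \<Rightarrow> complex \<Rightarrow> complex \<Rightarrow> complex \<Rightarrow> complex set" where
  "isogonal_line A B C P = reflect_across A (bisector_dir A B C) ` line A P"

definition isogonal_conjugate_of :: "complex \<Rightarrow> complex \<Rightarrow> complex \<Rightarrow> complex \<Rightarrow> complex \<Rightarrow> bool" where
  "isogonal_conjugate_of A B C P P' \<longleftrightarrow>
     P' \<in> isogonal_line A B C P \<inter> isogonal_line B C A P \<inter> isogonal_line C A B P"

definition conic_val :: "real \<Rightarrow> real \<Rightarrow> real \<Rightarrow> real \<Rightarrow> real \<Rightarrow> real \<Rightarrow> complex \<Rightarrow> real" where
  "conic_val a b c d e f z =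
     a * (Re z)\<^sup>2 + b * Re z * Im z + c * (Im z)\<^sup>2 + d * Re z + e * Im z + f"

text \<open>Nondegenerate: the symmetric matrix [[2a,b,d],[b,2c,e],[d,e,2f]] is invertible.\<close>
definition conic_nondegenerate :: "real \<Rightarrow> real \<Rightarrow> real \<Rightarrow> real \<Rightarrow> real \<Rightarrow> real \<Rightarrow> bool" where
  "conic_nondegenerate a b c d e f \<longleftrightarrow>
     2 * a*(4*c * f - e * e) - b*(2 * b * f - e * d) + d*(b * e - 2 * c * d) \<noteq> 0"

text \<open>Centre of the conic, in homogeneous coordinates (p:q:s): the pole of the line at
  infinity, i.e. M (p,q,s)^T is a multiple of (0,0,1). For a central conic this is the
  affine point (p/s, q/s) where the gradient vanishes (the centre of symmetry).\<close>
definition conic_center :: "real \<Rightarrow> real \<Rightarrow> real \<Rightarrow> real \<Rightarrow> real \<Rightarrow> real \<Rightarrow> real \<Rightarrow> real \<Rightarrow> real \<Rightarrow> bool" where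
  "conic_center a b c d e f p q s \<longleftrightarrow>
     (p, q, s) \<noteq> (0, 0, 0) \<and> 2 * a * p + b * q + d * s = 0 \<and> b * p + 2 * c * q + e * s = 0"

text \<open>The homogeneous point (p:q:s) lies on the line PQ: det [[P,1],[Q,1],[p,q,s]] = 0.\<close>
definition on_line_hom :: "complex \<Rightarrow> complex \<Rightarrow> real \<Rightarrow> real \<Rightarrow> real \<Rightarrow> bool" where
  "on_line_hom P Q p q s \<longleftrightarrow>
     Re P * (Im Q * s - q) - Im P * (Re Q * s - p) + (Re Q * q - Im Q * p) = 0"

end

theory Submission
  imports Defs
begin

definition Gw :: "real \<Rightarrow> real \<Rightarrow> real \<Rightarrow> real \<Rightarrow> real \<Rightarrow> real \<Rightarrow> real \<Rightarrow> real" where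
 "Gw f g h b1 g1 b2 g2 = (let qb = -h; qc = -g; m = f - g - h in
   (2 * qb * b1 + m * g1 - qb) * (m * b2 + 2 * qc * g2 - qc) - (m * b1 + 2 * qc * g1 - qc) * (2 * qb * b2 + m * g2 - qb))"

lemma Gw_hom: "Gw (x * f) (x * g) (x * h) b1 g1 b2 g2 = x^2 * Gw f g h b1 g1 b2 g2"
  unfolding Gw_def Let_def by (simp add: algebra_simps power2_eq_square)

lemma Gw_N:
  fixes b1 g1 b2 g2 :: real
  defines "a1 \<equiv> 1 - b1 - g1" and "a2 \<equiv> 1 - b2 - g2"
  shows "Gw ((g1 * a1) * (a2 * b2) - (a1 * b1) * (g2 * a2)) ((a1 * b1) * (b2 * g2) - (b1 * g1) * (a2 * b2)) ((b1 * g1) * (g2 * a2) - (g1 * a1) * (b2 * g2)) b1 g1 b2 g2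
    = (a1 * a2 * (b1 * g2+g1 * b2)+b1 * b2 * (g1 * a2+a1 * g2)+g1 * g2 * (a1 * b2+b1 * a2)) *
  (- g1 * b2^2 * g2 + g1^2 * b2^2 + g1^2 * b2^2 * g2 - g1^2 * b2^3 - g1^3 * b2^2 + g1^3 * b2^3 + b1 * b2 * g2^2 - 2 * b1 * g1 * b2 * g2^2 + 2 * b1 * g1 * b2^2 * g2 - b1 * g1^2 * b2 + 2 * b1 * g1^2 * b2 * g2 + b1 * g1^2 * b2^2 - 3 * b1 * g1^2 * b2^2 * g2 - b1^2 * g2^2 + b1^2 * g2^3 - b1^2 * b2 * g2^2 + b1^2 * g1 * g2 - b1^2 * g1 * g2^2 - 2 * b1^2 * g1 * b2 * g2 + 3 * b1^2 * g1 * b2 * g2^2 + b1^3 * g2^2 - b1^3 * g2^3)"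
  unfolding Gw_def Let_def a1_def a2_def by (simp add: algebra_simps power2_eq_square power3_eq_cube)


lemma core:
  fixes f g h b1 g1 b2 g2 :: real
  assumes ha1: "a1 = 1 - b1 - g1" and ha2: "a2 = 1 - b2 - g2"
    and Q1: "f * (b1 * g1) + g * (g1 * a1) + h * (a1 * b1) = 0"
    and Q2: "f * (b2 * g2) + g * (g2 * a2) + h * (a2 * b2) = 0"
    and R: "a1 * a2 * (b1 * g2+g1 * b2)+b1 * b2 * (g1 * a2+a1 * g2)+g1 * g2 * (a1 * b2+b1 * a2) = 0"
    and nz: "a1 \<noteq> 0" "b1 \<noteq> 0" "g1 \<noteq> 0" "a2 \<noteq> 0" "b2 \<noteq> 0" "g2 \<noteq> 0"
  shows "Gw f g h b1 g1 b2 g2 = 0"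
proof -
  define N1 where "N1 = (g1 * a1) * (a2 * b2) - (a1 * b1) * (g2 * a2)"
  define N2 where "N2 = (a1 * b1) * (b2 * g2) - (b1 * g1) * (a2 * b2)"
  define N3 where "N3 = (b1 * g1) * (g2 * a2) - (g1 * a1) * (b2 * g2)"
  have "\<exists>K. Gw N1 N2 N3 b1 g1 b2 g2 = (a1 * a2 * (b1 * g2+g1 * b2)+b1 * b2 * (g1 * a2+a1 * g2)+g1 * g2 * (a1 * b2+b1 * a2)) * K"
    unfolding N1_def N2_def N3_def ha1 ha2 using Gw_N by blast
  then have GN: "Gw N1 N2 N3 b1 g1 b2 g2 = 0" using R by auto
  have c12: "f * N2 = g * N1" and c13: "f * N3 = h * N1" and c23: "g * N3 = h * N2"
    unfolding N1_def N2_def N3_def using Q1 Q2 by algebra+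
  show ?thesis
  proof (cases "N1 = 0 \<and> N2 = 0 \<and> N3 = 0")
    case True
    have "b1 = b2 \<and> g1 = g2"
    proof -
      from True have e1: "(g1 * a1) * (a2 * b2) = (a1 * b1) * (g2 * a2)" and e2: "(a1 * b1) * (b2 * g2) = (b1 * g1) * (a2 * b2)"
        and e3: "(b1 * g1) * (g2 * a2) = (g1 * a1) * (b2 * g2)" unfolding N1_def N2_def N3_def by auto
      from e1 nz have f1: "g1 * b2 = b1 * g2" by (simp add: algebra_simps)
      from e2 nz have f2: "a1 * g2 = g1 * a2" by (simp add: algebra_simps)
      from e3 nz have f3: "b1 * a2 = a1 * b2" by (simp add: algebra_simps)
      from f3 f1 have "b1 = b2" unfolding ha1 ha2 by (simp add: algebra_simps)
      with f1 nz show ?thesis by simp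
    qed
    then show ?thesis unfolding Gw_def Let_def by (simp add: algebra_simps)
  next
    case False
    have "Gw f g h b1 g1 b2 g2 * N1^2 = 0"
    proof -
      have "Gw f g h b1 g1 b2 g2 * N1^2 = Gw (N1 * f) (N1 * g) (N1 * h) b1 g1 b2 g2"
        by (simp add: Gw_hom)
      also have "\<dots> = Gw (f * N1) (f * N2) (f * N3) b1 g1 b2 g2" using c12 c13 by (simp add: mult.commute)
      also have "\<dots> = f^2 * Gw N1 N2 N3 b1 g1 b2 g2" using Gw_hom[of f N1 N2 N3] by (simp add: mult.commute)
      finally show ?thesis using GN by simp
    qed
    moreover have "Gw f g h b1 g1 b2 g2 * N2^2 = 0"
    proof -
      have "Gw f g h b1 g1 b2 g2 * N2^2 = Gw (N2 * f) (N2 * g) (N2 * h) b1 g1 b2 g2"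
        by (simp add: Gw_hom)
      also have "\<dots> = Gw (g * N1) (g * N2) (g * N3) b1 g1 b2 g2" using c12 c23 by (simp add: mult.commute)
      also have "\<dots> = g^2 * Gw N1 N2 N3 b1 g1 b2 g2" using Gw_hom[of g N1 N2 N3] by (simp add: mult.commute)
      finally show ?thesis using GN by simp
    qed
    moreover have "Gw f g h b1 g1 b2 g2 * N3^2 = 0"
    proof -
      have "Gw f g h b1 g1 b2 g2 * N3^2 = Gw (N3 * f) (N3 * g) (N3 * h) b1 g1 b2 g2"
        by (simp add: Gw_hom)
      also have "\<dots> = Gw (h * N1) (h * N2) (h * N3) b1 g1 b2 g2" using c13 c23 by (simp add: mult.commute)
      also have "\<dots> = h^2 * Gw N1 N2 N3 b1 g1 b2 g2" using Gw_hom[of h N1 N2 N3] by (simp add: mult.commute)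
      finally show ?thesis using GN by simp
    qed
    ultimately show ?thesis using False by auto
  qed
qed



lemma cnj_unit: "z * cnj z = complex_of_real ((cmod z)^2)"
  using complex_norm_square[of z] by simp

lemma iso_im:
  assumes D: "Im (cnj (B - A) * (C - A)) \<noteq> 0" and P': "P' \<in> isogonal_line A B C P"
  shows "Im ((P' - A) * (P - A) * cnj (B - A) * cnj (C - A)) = 0"
proof -
  have BA: "B \<noteq> A" and CA: "C \<noteq> A" using D by auto
  define nb where "nb = cmod (B - A)"
  define nc where "nc = cmod (C - A)"
  have nb: "nb > 0" and nc: "nc > 0" using BA CA by (auto simp: nb_def nc_def)
  define e1 where "e1 = (B - A) / of_real nb"
  define e2 where "e2 = (C - A) / of_real nc"
  have u: "bisector_dir A B C = e1 + e2" unfolding bisector_dir_def e1_def e2_def nb_def nc_def by simp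
  have "cmod e1 = 1" unfolding e1_def using nb by (simp add: norm_divide nb_def)
  then have e1c: "e1 * cnj e1 = 1" using cnj_unit[of e1] by simp
  have "cmod e2 = 1" unfolding e2_def using nc by (simp add: norm_divide nc_def)
  then have e2c: "e2 * cnj e2 = 1" using cnj_unit[of e2] by simp
  have e1B: "e1 * cnj (B - A) = of_real nb"
  proof -
    have "e1 * cnj (B - A) = ((B - A) * cnj (B - A)) / of_real nb" unfolding e1_def by simp
    also have "\<dots> = of_real (nb^2) / of_real nb" unfolding cnj_unit nb_def by simp
    finally show ?thesis using nb by (simp add: power2_eq_square)
  qed
  have e2C: "e2 * cnj (C - A) = of_real nc"
  proof -
    have "e2 * cnj (C - A) = ((C - A) * cnj (C - A)) / of_real nc" unfolding e2_def by simp
    also have "\<dots> = of_real (nc^2) / of_real nc" unfolding cnj_unit nc_def by simp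
    finally show ?thesis using nc by (simp add: power2_eq_square)
  qed
  have unz: "e1 + e2 \<noteq> 0"
  proof
    assume "e1 + e2 = 0"
    then have "C - A = - of_real (nc/nb) * (B - A)" unfolding e1_def e2_def using nb nc
      by (simp add: field_simps)
    then have "cnj (B - A) * (C - A) = cnj (B - A) * (- of_real (nc/nb) * (B - A))" by (simp only:)
    also have "\<dots> = - of_real (nc/nb) * ((B - A) * cnj (B - A))" by (simp only: algebra_simps)
    also have "\<dots> = of_real (- (nc/nb) * (cmod (B - A))^2)" unfolding cnj_unit by simp
    finally show False using D by simp
  qed
  have cu: "cnj (e1 + e2) \<noteq> 0" using unz by (metis complex_cnj_zero_iff)
  have ratio: "(e1 + e2) / cnj (e1 + e2) = e1 * e2"
  proof -
    have "cnj (e1 + e2) * (e1 * e2) = (e1 * cnj e1) * e2 + (e2 * cnj e2) * e1" by (simp add: algebra_simps)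
    also have "\<dots> = e1 + e2" using e1c e2c by simp
    finally show ?thesis using cu by (simp add: field_simps)
  qed
  from P' obtain t where t: "P' = reflect_across A (bisector_dir A B C) (A + of_real t * (P - A))"
    unfolding isogonal_line_def line_def by auto
  have "P' - A = e1 * e2 * of_real t * cnj (P - A)"
    using t unfolding reflect_across_def u ratio by simp
  then have "(P' - A) * (P - A) * cnj (B - A) * cnj (C - A)
     = (e1 * e2 * of_real t * cnj (P - A)) * (P - A) * cnj (B - A) * cnj (C - A)" by (simp only:)
  also have "\<dots> = of_real t * ((P - A) * cnj (P - A)) * (e1 * cnj (B - A)) * (e2 * cnj (C - A))"
    by (simp only: mult_ac)
  also have "\<dots> = of_real (t * (cmod (P - A))^2 * nb * nc)" unfolding cnj_unit e1B e2C by simp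
  finally show ?thesis by simp
qed





lemma div_cnj: "(z::complex) \<noteq> 0 \<Longrightarrow> w / z = (cnj z * w) / (z * cnj z)"
  by (simp add: field_simps)

lemma noncol:
  assumes "\<not> collinear {A, B, C}"
  shows "Im (cnj (B - A) * (C - A)) \<noteq> 0"
proof
  assume h: "Im (cnj (B - A) * (C - A)) = 0"
  show False
  proof (cases "B = A")
    case True
    then show False using assms by (simp add: insert_commute)
  next
    case False
    have "collinear {0, B - A, C - A}"
    proof -
      have "(C - A) / (B - A) = (cnj (B - A) * (C - A)) / ((B - A) * cnj (B - A))"
        using False div_cnj[of "B - A" "C - A"] by simp
      also have "\<dots> = (cnj (B - A) * (C - A)) / of_real ((cmod (B - A))^2)"
        unfolding cnj_unit ..
      finally have "Im ((C - A) / (B - A)) = 0" using h by (simp add: Im_divide_of_real)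
      then show ?thesis unfolding collinear_iff_Reals by (simp add: complex_is_Real_iff)
    qed
    then have "collinear {B, A, C}" using collinear_3[of B A C] by simp
    then show False using assms by (simp add: insert_commute)
  qed
qed



lemma iso_poly_real:
  fixes b1 b2 c1 c2 v w v' w' :: real
  shows "Im (Complex (v' * b1+w' * c1) (v' * b2+w' * c2) * Complex (v * b1+w * c1) (v * b2+w * c2) * cnj (Complex b1 b2) * cnj (Complex c1 c2))
    = (b1 * c2 - b2 * c1) * ((c1^2+c2^2) * w * w' - (b1^2+b2^2) * v * v')"
  by (simp add: algebra_simps power2_eq_square)

lemma iso_bary_poly:
  assumes P1: "Re P = Re A + v * (Re B - Re A) + w * (Re C - Re A)" and P2: "Im P = Im A + v * (Im B - Im A) + w * (Im C - Im A)"
   and Q1: "Re P' = Re A + v' * (Re B - Re A) + w' * (Re C - Re A)" and Q2: "Im P' = Im A + v' * (Im B - Im A) + w' * (Im C - Im A)"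
  shows "Im ((P' - A) * (P - A) * cnj (B - A) * cnj (C - A)) = Im (cnj (B - A) * (C - A)) * ((cmod (C - A))^2 * w * w' - (cmod (B - A))^2 * v * v')"
proof -
  define b1 where "b1 = Re B - Re A"
  define b2 where "b2 = Im B - Im A"
  define c1 where "c1 = Re C - Re A"
  define c2 where "c2 = Im C - Im A"
  have e1: "P' - A = Complex (v' * b1+w' * c1) (v' * b2+w' * c2)" using Q1 Q2 by (simp add: complex_eq_iff b1_def b2_def c1_def c2_def)
  have e2: "P - A = Complex (v * b1+w * c1) (v * b2+w * c2)" using P1 P2 by (simp add: complex_eq_iff b1_def b2_def c1_def c2_def)
  have e3: "B - A = Complex b1 b2" "C - A = Complex c1 c2" by (simp_all add: complex_eq_iff b1_def b2_def c1_def c2_def)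
  show ?thesis unfolding e1 e2 e3 iso_poly_real by (simp add: cmod_power2)
qed

lemma bary_real:
  fixes ax ay bx by' cx cy px py :: real
  assumes Dr: "(bx - ax) * (cy - ay) - (by' - ay) * (cx - ax) \<noteq> 0"
  shows "\<exists>v w. px = ax + v * (bx - ax) + w * (cx - ax) \<and> py = ay + v * (by' - ay) + w * (cy - ay)"
proof -
  define D where "D = (bx - ax) * (cy - ay) - (by' - ay) * (cx - ax)"
  define nv where "nv = (px - ax) * (cy - ay) - (py - ay) * (cx - ax)"
  define nw where "nw = (bx - ax) * (py - ay) - (by' - ay) * (px - ax)"
  have D0: "D \<noteq> 0" using Dr D_def by simp
  have 1: "px = ax + (nv/D) * (bx - ax) + (nw/D) * (cx - ax)"
    using D0 by (simp add: field_simps) (simp add: D_def nv_def nw_def algebra_simps)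
  have 2: "py = ay + (nv/D) * (by' - ay) + (nw/D) * (cy - ay)"
    using D0 by (simp add: field_simps) (simp add: D_def nv_def nw_def algebra_simps)
  from 1 2 show ?thesis by blast
qed

lemma bary:
  assumes D: "Im (cnj (B - A) * (C - A)) \<noteq> 0"
  shows "\<exists>v w. Re P = Re A + v * (Re B - Re A) + w * (Re C - Re A) \<and> Im P = Im A + v * (Im B - Im A) + w * (Im C - Im A)"
  apply (rule bary_real)
  using D by (simp add: algebra_simps)



lemma conj_poly:
  fixes ax ay bx by' cx cy ox oy r v1 w1 v2 w2 :: real
  assumes hA: "(ax-ox)^2+(ay-oy)^2 = r^2" and hB: "(bx-ox)^2+(by'-oy)^2 = r^2"
    and hC: "(cx-ox)^2+(cy-oy)^2 = r^2"
    and cj: "(ax + v1 * (bx-ax) + w1 * (cx-ax) - ox) * (ax + v2 * (bx-ax) + w2 * (cx-ax) - ox)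
           + (ay + v1 * (by'-ay) + w1 * (cy-ay) - oy) * (ay + v2 * (by'-ay) + w2 * (cy-ay) - oy) = r^2"
  shows "((cx-bx)^2+(cy-by')^2) * (v1 * w2+w1 * v2) + ((cx-ax)^2+(cy-ay)^2) * (w1 * (1-v2-w2)+(1-v1-w1) * w2)
       + ((bx-ax)^2+(by'-ay)^2) * ((1-v1-w1) * v2+v1 * (1-v2-w2)) = 0"
proof -
  define hA' where "hA' = (ax-ox)^2+(ay-oy)^2 - r^2"
  define hB' where "hB' = (bx-ox)^2+(by'-oy)^2 - r^2"
  define hC' where "hC' = (cx-ox)^2+(cy-oy)^2 - r^2"
  have id: "2 * ((ax + v1 * (bx-ax) + w1 * (cx-ax) - ox) * (ax + v2 * (bx-ax) + w2 * (cx-ax) - ox)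
           + (ay + v1 * (by'-ay) + w1 * (cy-ay) - oy) * (ay + v2 * (by'-ay) + w2 * (cy-ay) - oy) - r^2)
      + (((cx-bx)^2+(cy-by')^2) * (v1 * w2+w1 * v2) + ((cx-ax)^2+(cy-ay)^2) * (w1 * (1-v2-w2)+(1-v1-w1) * w2)
       + ((bx-ax)^2+(by'-ay)^2) * ((1-v1-w1) * v2+v1 * (1-v2-w2)))
      = ((1-v1-w1)+(1-v2-w2)) * hA' + (v1+v2) * hB' + (w1+w2) * hC'"
    unfolding hA'_def hB'_def hC'_def by (simp add: algebra_simps power2_eq_square)
  have "hA' = 0" "hB' = 0" "hC' = 0" using hA hB hC by (simp_all add: hA'_def hB'_def hC'_def)
  then show ?thesis using id cj by simp
qed



lemma final_step:
  fixes a b c d e f p q s x1 y1 x2 y2 :: real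
  assumes nd: "conic_nondegenerate a b c d e f" and cen: "conic_center a b c d e f p q s"
    and G: "(2 * a * x1 + b * y1 + d) * (b * x2 + 2 * c * y2 + e) - (b * x1 + 2 * c * y1 + e) * (2 * a * x2 + b * y2 + d) = 0"
  shows "x1 * (y2* s - q) - y1 * (x2* s - p) + (x2 * q - y2 * p) = 0"
proof -
  define L where "L = x1 * (y2* s - q) - y1 * (x2* s - p) + (x2 * q - y2 * p)"
  have E1: "2 * a * p + b * q + d * s = 0" and E2: "b * p + 2 * c * q + e * s = 0"
    and P0: "(p, q, s) \<noteq> (0, 0, 0)" using cen unfolding conic_center_def by auto
  have nz: "b * e - 2 * c * d \<noteq> 0 \<or> d * b - 2 * a * e \<noteq> 0 \<or> 4 * a * c - b^2 \<noteq> 0"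
  proof (rule ccontr)
    assume "\<not> ?thesis"
    then have "b * e - 2 * c * d = 0" "d * b - 2 * a * e = 0" "4 * a * c - b^2 = 0" by auto
    then have "d * (b * e - 2 * c * d) + e * (d * b - 2 * a * e) + 2 * f * (4 * a * c - b^2) = 0" by simp
    moreover have "d * (b * e - 2 * c * d) + e * (d * b - 2 * a * e) + 2 * f * (4 * a * c - b^2) =
       2 * a * (4 * c * f - e * e) - b * (2 * b * f - e * d) + d * (b * e - 2 * c * d)"
      by (simp add: algebra_simps power2_eq_square)
    ultimately show False using nd unfolding conic_nondegenerate_def by simp
  qed
  have "(b * e - 2 * c * d) * L = 0" unfolding L_def using E1 E2 G by algebra
  moreover have "(d * b - 2 * a * e) * L = 0" unfolding L_def using E1 E2 G by algebra
  moreover have "(4 * a * c - b^2) * L = 0" unfolding L_def using E1 E2 G by algebra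
  ultimately have "L = 0" using nz by auto
  then show ?thesis unfolding on_line_hom_def L_def by simp
qed


theorem corollary3p2p1:
  fixes A B C X Y X' Y' Oc :: complex and r a b c d e f p q s :: real
  assumes tri: "\<not> collinear {A, B, C}"
    and circ: "circumcircle A B C Oc r"
    and conj: "conjugate_wrt_circle Oc r X Y"
    and X_off: "X \<notin> line A B \<union> line B C \<union> line C A"
    and Y_off: "Y \<notin> line A B \<union> line B C \<union> line C A"
    and X': "isogonal_conjugate_of A B C X X'"
    and Y': "isogonal_conjugate_of A B C Y Y'"
    and nondeg: "conic_nondegenerate a b c d e f"
    and through: "\<forall>Z \<in> {A, B, C, X', Y'}. conic_val a b c d e f Z = 0"
    and center: "conic_center a b c d e f p q s"
  shows "on_line_hom X' Y' p q s"
proof -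
  have D: "Im (cnj (B - A) * (C - A)) \<noteq> 0" using noncol[OF tri] .
  have "Im (cnj (C - B) * (A - B)) = Im (cnj (B - A) * (C - A))" by (simp add: algebra_simps)
  then have DB: "Im (cnj (C - B) * (A - B)) \<noteq> 0" using D by simp
  have "Im (cnj (A - C) * (B - C)) = Im (cnj (B - A) * (C - A))" by (simp add: algebra_simps)
  then have DC: "Im (cnj (A - C) * (B - C)) \<noteq> 0" using D by simp
  define Dv where "Dv = (Re B - Re A) * (Im C - Im A) - (Im B - Im A) * (Re C - Re A)"
  have "Im (cnj (B - A) * (C - A)) = Dv" unfolding Dv_def by (simp add: algebra_simps)
  then have Dv: "Dv \<noteq> 0" using D by simp
  obtain v1 w1 where X1: "Re X = Re A + v1 * (Re B - Re A) + w1 * (Re C - Re A)"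
      and X2: "Im X = Im A + v1 * (Im B - Im A) + w1 * (Im C - Im A)" using bary[OF D] by blast
  obtain v2 w2 where Y1: "Re Y = Re A + v2 * (Re B - Re A) + w2 * (Re C - Re A)"
      and Y2: "Im Y = Im A + v2 * (Im B - Im A) + w2 * (Im C - Im A)" using bary[OF D] by blast
  obtain p1 q1 where X'1: "Re X' = Re A + p1 * (Re B - Re A) + q1 * (Re C - Re A)"
      and X'2: "Im X' = Im A + p1 * (Im B - Im A) + q1 * (Im C - Im A)" using bary[OF D] by blast
  obtain p2 q2 where Y'1: "Re Y' = Re A + p2 * (Re B - Re A) + q2 * (Re C - Re A)"
      and Y'2: "Im Y' = Im A + p2 * (Im B - Im A) + q2 * (Im C - Im A)" using bary[OF D] by blast
  define u1 where "u1 = 1 - v1 - w1"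
  define u2 where "u2 = 1 - v2 - w2"
  define k1 where "k1 = 1 - p1 - q1"
  define k2 where "k2 = 1 - p2 - q2"
  define sa where "sa = (Re C - Re B)^2 + (Im C - Im B)^2"
  define sb where "sb = (Re C - Re A)^2 + (Im C - Im A)^2"
  define sc where "sc = (Re B - Re A)^2 + (Im B - Im A)^2"
  have sa1: "(cmod (C - B))^2 = sa" and sa2: "(cmod (B - C))^2 = sa"
    unfolding cmod_power2 sa_def by (simp_all add: power2_eq_square algebra_simps)
  have sb1: "(cmod (C - A))^2 = sb" and sb2: "(cmod (A - C))^2 = sb"
    unfolding cmod_power2 sb_def by (simp_all add: power2_eq_square algebra_simps)
  have sc1: "(cmod (B - A))^2 = sc" and sc2: "(cmod (A - B))^2 = sc"
    unfolding cmod_power2 sc_def by (simp_all add: power2_eq_square algebra_simps)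
  have "B \<noteq> C" using DB by auto
  then have sa0: "sa \<noteq> 0" using sa1 by auto
  have "A \<noteq> C" using D by auto
  then have sb0: "sb \<noteq> 0" using sb1 by auto
  have "A \<noteq> B" using D by auto
  then have sc0: "sc \<noteq> 0" using sc1 by auto
  have isoeqs: "sb * w * w' = sc * v * v' \<and> sc * (1 - v - w) * (1 - v' - w') = sa * w * w'
       \<and> sa * v * v' = sb * (1 - v - w) * (1 - v' - w')"
    if PP': "isogonal_conjugate_of A B C P P'"
      and P1: "Re P = Re A + v * (Re B - Re A) + w * (Re C - Re A)"
      and P2: "Im P = Im A + v * (Im B - Im A) + w * (Im C - Im A)"
      and Q1: "Re P' = Re A + v' * (Re B - Re A) + w' * (Re C - Re A)"
      and Q2: "Im P' = Im A + v' * (Im B - Im A) + w' * (Im C - Im A)" for P P' v w v' w'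
  proof -
    have IA: "P' \<in> isogonal_line A B C P" and IB: "P' \<in> isogonal_line B C A P"
      and IC: "P' \<in> isogonal_line C A B P" using PP' unfolding isogonal_conjugate_of_def by auto
    have P1B: "Re P = Re B + w * (Re C - Re B) + (1 - v - w) * (Re A - Re B)"
      and P2B: "Im P = Im B + w * (Im C - Im B) + (1 - v - w) * (Im A - Im B)"
      and Q1B: "Re P' = Re B + w' * (Re C - Re B) + (1 - v' - w') * (Re A - Re B)"
      and Q2B: "Im P' = Im B + w' * (Im C - Im B) + (1 - v' - w') * (Im A - Im B)"
      using P1 P2 Q1 Q2 by (simp_all add: algebra_simps)
    have P1C: "Re P = Re C + (1 - v - w) * (Re A - Re C) + v * (Re B - Re C)"
      and P2C: "Im P = Im C + (1 - v - w) * (Im A - Im C) + v * (Im B - Im C)"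
      and Q1C: "Re P' = Re C + (1 - v' - w') * (Re A - Re C) + v' * (Re B - Re C)"
      and Q2C: "Im P' = Im C + (1 - v' - w') * (Im A - Im C) + v' * (Im B - Im C)"
      using P1 P2 Q1 Q2 by (simp_all add: algebra_simps)
    have "(cmod (C - A))^2 * w * w' - (cmod (B - A))^2 * v * v' = 0"
      using iso_im[OF D IA] iso_bary_poly[OF P1 P2 Q1 Q2] D by simp
    then have e1: "sb * w * w' = sc * v * v'" unfolding sb1 sc1 by simp
    have "(cmod (A - B))^2 * (1 - v - w) * (1 - v' - w') - (cmod (C - B))^2 * w * w' = 0"
      using iso_im[OF DB IB] iso_bary_poly[OF P1B P2B Q1B Q2B] DB by simp
    then have e2: "sc * (1 - v - w) * (1 - v' - w') = sa * w * w'" unfolding sa1 sc2 by simp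
    have "(cmod (B - C))^2 * v * v' - (cmod (A - C))^2 * (1 - v - w) * (1 - v' - w') = 0"
      using iso_im[OF DC IC] iso_bary_poly[OF P1C P2C Q1C Q2C] DC by simp
    then have e3: "sa * v * v' = sb * (1 - v - w) * (1 - v' - w')" unfolding sa2 sb2 by simp
    from e1 e2 e3 show ?thesis by blast
  qed
  have EX: "sb * w1 * q1 = sc * v1 * p1" "sc * u1 * k1 = sa * w1 * q1" "sa * v1 * p1 = sb * u1 * k1"
    using isoeqs[OF X' X1 X2 X'1 X'2] unfolding u1_def k1_def by auto
  have EY: "sb * w2 * q2 = sc * v2 * p2" "sc * u2 * k2 = sa * w2 * q2" "sa * v2 * p2 = sb * u2 * k2"
    using isoeqs[OF Y' Y1 Y2 Y'1 Y'2] unfolding u2_def k2_def by auto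
  have offnz: "v \<noteq> 0 \<and> w \<noteq> 0 \<and> 1 - v - w \<noteq> 0"
    if off: "P \<notin> line A B \<union> line B C \<union> line C A"
      and P1: "Re P = Re A + v * (Re B - Re A) + w * (Re C - Re A)"
      and P2: "Im P = Im A + v * (Im B - Im A) + w * (Im C - Im A)" for P v w
  proof (intro conjI notI)
    assume "v = 0"
    then have "P = C + of_real (1 - w) * (A - C)" using P1 P2 by (simp add: complex_eq_iff algebra_simps)
    then have "P \<in> line C A" unfolding line_def by blast
    then show False using off by blast
  next
    assume "w = 0"
    then have "P = A + of_real v * (B - A)" using P1 P2 by (simp add: complex_eq_iff algebra_simps)
    then have "P \<in> line A B" unfolding line_def by blast
    then show False using off by blast
  next
    assume "1 - v - w = 0"
    then have vw: "v = 1 - w" by simp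
    have "P = B + of_real w * (C - B)" using P1 P2 unfolding vw by (simp add: complex_eq_iff algebra_simps)
    then have "P \<in> line B C" unfolding line_def by blast
    then show False using off by blast
  qed
  have NX: "v1 \<noteq> 0" "w1 \<noteq> 0" "u1 \<noteq> 0" using offnz[OF X_off X1 X2] unfolding u1_def by auto
  have NY: "v2 \<noteq> 0" "w2 \<noteq> 0" "u2 \<noteq> 0" using offnz[OF Y_off Y1 Y2] unfolding u2_def by auto
  have primenz: "p \<noteq> 0 \<and> q \<noteq> 0 \<and> k \<noteq> 0"
    if "sb * w * q = sc * v * p" "sc * u * k = sa * w * q" "sa * v * p = sb * u * k"
       "v \<noteq> 0" "w \<noteq> 0" "u \<noteq> 0" "k = 1 - p - q" for u v w k p q
  proof -
    note h = that
    have a: "p \<noteq> 0"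
    proof
      assume "p = 0"
      then have "sb * u * k = 0" using h(3) by simp
      then have "k = 0" using sb0 h(6) by simp
      then have "sa * w * q = 0" using h(2) by simp
      then have "q = 0" using sa0 h(5) by simp
      then show False using h(7) \<open>p = 0\<close> \<open>k = 0\<close> by simp
    qed
    have b: "q \<noteq> 0"
    proof
      assume "q = 0"
      then have "sc * v * p = 0" using h(1) by simp
      then have "p = 0" using sc0 h(4) by simp
      then show False using a by simp
    qed
    have c: "k \<noteq> 0"
    proof
      assume "k = 0"
      then have "sa * w * q = 0" using h(2) by simp
      then have "q = 0" using sa0 h(5) by simp
      then show False using b by simp
    qed
    show ?thesis using a b c by simp
  qed
  have NX': "p1 \<noteq> 0" "q1 \<noteq> 0" "k1 \<noteq> 0" using primenz[OF EX NX(1,2,3) k1_def] by auto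
  have NY': "p2 \<noteq> 0" "q2 \<noteq> 0" "k2 \<noteq> 0" using primenz[OF EY NY(1,2,3) k2_def] by auto
  have hA: "(Re A - Re Oc)^2 + (Im A - Im Oc)^2 = r^2" and hB: "(Re B - Re Oc)^2 + (Im B - Im Oc)^2 = r^2"
    and hC: "(Re C - Re Oc)^2 + (Im C - Im Oc)^2 = r^2"
  proof -
    have rA: "r = cmod (A - Oc)" "r = cmod (B - Oc)" "r = cmod (C - Oc)"
      using circ unfolding circumcircle_def dist_norm by (auto simp: norm_minus_commute)
    show "(Re A - Re Oc)^2 + (Im A - Im Oc)^2 = r^2" unfolding rA(1) cmod_power2 by simp
    show "(Re B - Re Oc)^2 + (Im B - Im Oc)^2 = r^2" unfolding rA(2) cmod_power2 by simp
    show "(Re C - Re Oc)^2 + (Im C - Im Oc)^2 = r^2" unfolding rA(3) cmod_power2 by simp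
  qed
  have cj: "(Re A + v1 * (Re B - Re A) + w1 * (Re C - Re A) - Re Oc) * (Re A + v2 * (Re B - Re A) + w2 * (Re C - Re A) - Re Oc)
           + (Im A + v1 * (Im B - Im A) + w1 * (Im C - Im A) - Im Oc) * (Im A + v2 * (Im B - Im A) + w2 * (Im C - Im A) - Im Oc) = r^2"
    using conj unfolding conjugate_wrt_circle_def polar_circle_def
    by (simp add: inner_complex_def X1 X2 Y1 Y2)
  have S: "sa * (v1 * w2 + w1 * v2) + sb * (w1 * u2 + u1 * w2) + sc * (u1 * v2 + v1 * u2) = 0"
    using conj_poly[OF hA hB hC cj] unfolding sa_def sb_def sc_def u1_def u2_def by simp
  have v1e: "v1 = u1 * k1 * sb / (sa * p1)" using EX(3) sa0 NX' by (simp add: field_simps)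
  have w1e: "w1 = u1 * k1 * sc / (sa * q1)" using EX(2) sa0 NX' by (simp add: field_simps)
  have v2e: "v2 = u2 * k2 * sb / (sa * p2)" using EY(3) sa0 NY' by (simp add: field_simps)
  have w2e: "w2 = u2 * k2 * sc / (sa * q2)" using EY(2) sa0 NY' by (simp add: field_simps)
  define RR where "RR = k1 * k2 * (p1 * q2 + q1 * p2) + p1 * p2 * (q1 * k2 + k1 * q2) + q1 * q2 * (k1 * p2 + p1 * k2)"
  have "sa * (v1 * w2 + w1 * v2) + sb * (w1 * u2 + u1 * w2) + sc * (u1 * v2 + v1 * u2)
      = u1 * u2 * sb * sc * RR / (sa * p1 * q1 * p2 * q2)"
    unfolding v1e w1e v2e w2e RR_def using sa0 NX' NY' by (simp add: field_simps)
  then have RR: "RR = 0" using S sa0 sb0 sc0 NX NY NX' NY' by simp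
  have FA: "conic_val a b c d e f A = 0" and FB: "conic_val a b c d e f B = 0"
    and FC: "conic_val a b c d e f C = 0" and FX: "conic_val a b c d e f X' = 0"
    and FY: "conic_val a b c d e f Y' = 0" using through by auto
  define qb where "qb = a * (Re B - Re A)^2 + b * (Re B - Re A) * (Im B - Im A) + c * (Im B - Im A)^2"
  define qc where "qc = a * (Re C - Re A)^2 + b * (Re C - Re A) * (Im C - Im A) + c * (Im C - Im A)^2"
  define m where "m = 2 * a * (Re B - Re A) * (Re C - Re A) + b * ((Re B - Re A) * (Im C - Im A) + (Im B - Im A) * (Re C - Re A)) + 2 * c * (Im B - Im A) * (Im C - Im A)"
  have conic_bary: "conic_val a b c d e f P = (1 - be - ga) * conic_val a b c d e f A + be * conic_val a b c d e f B
      + ga * conic_val a b c d e f C + ((m - qb - qc) * (be * ga) + (- qc) * (ga * (1 - be - ga)) + (- qb) * ((1 - be - ga) * be))"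
    if "Re P = Re A + be * (Re B - Re A) + ga * (Re C - Re A)" "Im P = Im A + be * (Im B - Im A) + ga * (Im C - Im A)" for P be ga
    unfolding conic_val_def qb_def qc_def m_def that by (simp add: algebra_simps power2_eq_square)
  have Q1: "(m - qb - qc) * (p1 * q1) + (- qc) * (q1 * k1) + (- qb) * (k1 * p1) = 0"
    using conic_bary[OF X'1 X'2] FA FB FC FX unfolding k1_def by simp
  have Q2: "(m - qb - qc) * (p2 * q2) + (- qc) * (q2 * k2) + (- qb) * (k2 * p2) = 0"
    using conic_bary[OF Y'1 Y'2] FA FB FC FY unfolding k2_def by simp
  have Gw0: "Gw (m - qb - qc) (- qc) (- qb) p1 q1 p2 q2 = 0"
    by (rule core[OF k1_def k2_def Q1 Q2 RR[unfolded RR_def] NX'(3,1,2) NY'(3,1,2)])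
  have gradb: "(2 * a * Re P + b * Im P + d) * (Re B - Re A) + (b * Re P + 2 * c * Im P + e) * (Im B - Im A)
      = conic_val a b c d e f B - conic_val a b c d e f A + 2 * qb * be + m * ga - qb"
    and gradc: "(2 * a * Re P + b * Im P + d) * (Re C - Re A) + (b * Re P + 2 * c * Im P + e) * (Im C - Im A)
      = conic_val a b c d e f C - conic_val a b c d e f A + m * be + 2 * qc * ga - qc"
    if "Re P = Re A + be * (Re B - Re A) + ga * (Re C - Re A)" "Im P = Im A + be * (Im B - Im A) + ga * (Im C - Im A)" for P be ga
    unfolding conic_val_def qb_def qc_def m_def that by (simp_all add: algebra_simps power2_eq_square)
  define gx1 where "gx1 = 2 * a * Re X' + b * Im X' + d"
  define gy1 where "gy1 = b * Re X' + 2 * c * Im X' + e"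
  define gx2 where "gx2 = 2 * a * Re Y' + b * Im Y' + d"
  define gy2 where "gy2 = b * Re Y' + 2 * c * Im Y' + e"
  have b1: "gx1 * (Re B - Re A) + gy1 * (Im B - Im A) = 2 * qb * p1 + m * q1 - qb"
    using gradb[OF X'1 X'2] FA FB unfolding gx1_def gy1_def by simp
  have c1: "gx1 * (Re C - Re A) + gy1 * (Im C - Im A) = m * p1 + 2 * qc * q1 - qc"
    using gradc[OF X'1 X'2] FA FC unfolding gx1_def gy1_def by simp
  have b2: "gx2 * (Re B - Re A) + gy2 * (Im B - Im A) = 2 * qb * p2 + m * q2 - qb"
    using gradb[OF Y'1 Y'2] FA FB unfolding gx2_def gy2_def by simp
  have c2: "gx2 * (Re C - Re A) + gy2 * (Im C - Im A) = m * p2 + 2 * qc * q2 - qc"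
    using gradc[OF Y'1 Y'2] FA FC unfolding gx2_def gy2_def by simp
  have "Gw (m - qb - qc) (- qc) (- qb) p1 q1 p2 q2 =
      (gx1 * (Re B - Re A) + gy1 * (Im B - Im A)) * (gx2 * (Re C - Re A) + gy2 * (Im C - Im A))
    - (gx1 * (Re C - Re A) + gy1 * (Im C - Im A)) * (gx2 * (Re B - Re A) + gy2 * (Im B - Im A))"
    unfolding b1 c1 b2 c2 Gw_def Let_def by (simp add: algebra_simps)
  also have "\<dots> = (gx1 * gy2 - gy1 * gx2) * Dv" unfolding Dv_def by (simp add: algebra_simps)
  finally have "(gx1 * gy2 - gy1 * gx2) * Dv = 0" using Gw0 by simp
  then have G: "gx1 * gy2 - gy1 * gx2 = 0" using Dv by simp
  show ?thesis
    using final_step[OF nondeg center G[unfolded gx1_def gy1_def gx2_def gy2_def]]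
    unfolding on_line_hom_def by simp
qed


end
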